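(* Let $(X,d)$ be a finite tree-like pseudometric space, and let $(\mathcal S,\alpha)$ be the unique positively weighted system of compatible splits of $X$ with $d=d_\alpha$. Then $$\operatorname{LIP}(X,d)=\sum_{\sigma\in\mathcal S}\alpha_\sigma S_\sigma$$ (Minkowski sum); in particular $\operatorname{LIP}(X,d)$ is a zonotope.
   Context: Let $X$ be a finite set, $n:=|X|$, $\{\mathbbm 1_k\}$ the standard basis of $\mathbb R^X$, $\mathbbm 1_A:=\sum_{x\in A}\mathbbm 1_x$. A split of $X$ is an unordered pair of nonempty disjoint subsets $A,B$ with $A\cup B=X$, written $A|B$. Splits $A|B$ and $C|D$ are compatible if at least one of $A\cap C,A\cap D,B\cap C,B\cap D$ is empty; a system of splits is compatible if its elements are pairwise compatible. For $\sigma=A|B$, $\delta_\sigma(i,j)=0$ if $i,j$ are in the same side, $1$ otherwise; for $\alpha\in\mathbb R_{\ge0}^{\mathcal S}$, $d_\alpha:=\sum_{\sigma\in\mathcal S}\alpha_\sigma\delta_\sigma$; the weighting is positive if all $\alpha_\sigma>0$. $S_\sigma:=\operatorname{conv}\{\tfrac{|B|}{n}\mathbbm 1_A-\tfrac{|A|}{n}\mathbbm 1_B,\ \tfrac{|A|}{n}\mathbbm 1_B-\tfrac{|B|}{n}\mathbbm 1_A\}$. For a pseudometric $d$, $\operatorname{LIP}(X,d):=\{x\in\mathbb R^X\mid\sum_i x_i=0,\ x_i-x_j\le d(i,j)\ \forall i,j\}$. An $X$-tree is a pair $(T,\phi)$ with $T$ a finite tree and $\phi:X\to V(T)$ a map whose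 image contains every vertex of degree at most $2$. A pseudometric $d$ on $X$ is tree-like if there are an $X$-tree $(T,\phi)$ and edge weights $w:E(T)\to\mathbb R_{>0}$ such that $d(x,y)$ equals the total weight of the unique path in $T$ from $\phi(x)$ to $\phi(y)$. It is known (and may be used) that a pseudometric is tree-like if and only if it equals $d_\alpha$ for a positively weighted compatible split system $(\mathcal S,\alpha)$, and that this system is unique; its splits correspond bijectively to edges of $T$ (the split of an edge $e$ separates the preimages under $\phi$ of the two components of $T-e$). *)

theory Defs
  imports "HOL-Analysis.Analysis"
begin

text \<open>Vectors in R^X are functions 'a => real vanishing outside X.
  A split of X is an unordered pair {A, B} (a 2-element set of sets).\<close>

definition is_split :: "'a set \<Rightarrow> 'a set set \<Rightarrow> bool" where
  "is_split X \<sigma> \<longleftrightarrow> (\<exists>A B. \<sigma> = {A, B} \<and> A \<noteq> {} \<and> B \<noteq> {} \<and> A \<inter> B = {} \<and> A \<union> B = X)"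

definition splits_compatible :: "'a set set \<Rightarrow> 'a set set \<Rightarrow> bool" where
  "splits_compatible \<sigma> \<tau> \<longleftrightarrow> (\<exists>A\<in>\<sigma>. \<exists>C\<in>\<tau>. A \<inter> C = {})"

definition compatible_system :: "'a set set set \<Rightarrow> bool" where
  "compatible_system S \<longleftrightarrow> (\<forall>\<sigma>\<in>S. \<forall>\<tau>\<in>S. splits_compatible \<sigma> \<tau>)"

definition split_delta :: "'a set set \<Rightarrow> 'a \<Rightarrow> 'a \<Rightarrow> real" where
  "split_delta \<sigma> i j = (if \<exists>A\<in>\<sigma>. i \<in> A \<and> j \<in> A then 0 else 1)"

definition d_alpha :: "'a set set set \<Rightarrow> ('a set set \<Rightarrow> real) \<Rightarrow> 'a \<Rightarrow> 'a \<Rightarrow> real" where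
  "d_alpha S \<alpha> i j = (\<Sum>\<sigma>\<in>S. \<alpha> \<sigma> * split_delta \<sigma> i j)"

definition vecs :: "'a set \<Rightarrow> ('a \<Rightarrow> real) set" where
  "vecs X = {x. \<forall>i. i \<notin> X \<longrightarrow> x i = 0}"

definition indic :: "'a set \<Rightarrow> 'a \<Rightarrow> real" where
  "indic A = (\<lambda>i. if i \<in> A then 1 else 0)"

definition LIP :: "'a set \<Rightarrow> ('a \<Rightarrow> 'a \<Rightarrow> real) \<Rightarrow> ('a \<Rightarrow> real) set" where
  "LIP X d = {x \<in> vecs X. (\<Sum>i\<in>X. x i) = 0 \<and> (\<forall>i\<in>X. \<forall>j\<in>X. x i - x j \<le> d i j)}"

definition split_vec :: "'a set \<Rightarrow> 'a set set \<Rightarrow> 'a \<Rightarrow> real" where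
  "split_vec X \<sigma> = (let A = (SOME A. A \<in> \<sigma>); B = X - A; n = real (card X) in
     (\<lambda>i. (real (card B) / n) * indic A i - (real (card A) / n) * indic B i))"

definition split_seg :: "'a set \<Rightarrow> 'a set set \<Rightarrow> ('a \<Rightarrow> real) set" where
  "split_seg X \<sigma> = {(\<lambda>i. (1 - u) * split_vec X \<sigma> i + u * (- split_vec X \<sigma> i)) | u. 0 \<le> u \<and> u \<le> 1}"

definition scale_set :: "real \<Rightarrow> ('a \<Rightarrow> real) set \<Rightarrow> ('a \<Rightarrow> real) set" where
  "scale_set c P = {(\<lambda>i. c * y i) | y. y \<in> P}"

definition minkowski_sum :: "'b set \<Rightarrow> ('b \<Rightarrow> ('a \<Rightarrow> real) set) \<Rightarrow> ('a \<Rightarrow> real) set" where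
  "minkowski_sum I P = {(\<lambda>i. \<Sum>k\<in>I. f k i) | f. \<forall>k\<in>I. f k \<in> P k}"

end

theory Submission
  imports Defs
begin

locale tsetup =
  fixes X :: "'a set" and S :: "'a set set set" and \<alpha> :: "'a set set \<Rightarrow> real" and r :: 'a
  assumes finX: "finite X" and splits: "\<forall>\<sigma>\<in>S. is_split X \<sigma>"
    and compat: "compatible_system S" and pos: "\<forall>\<sigma>\<in>S. \<alpha> \<sigma> > 0" and rX: "r \<in> X"
begin

definition sd :: "'a set set \<Rightarrow> 'a set" where "sd \<sigma> = (SOME A. A \<in> \<sigma> \<and> r \<notin> A)"

lemma sd_props:
  assumes "\<sigma> \<in> S"
  shows "sd \<sigma> \<in> \<sigma> \<and> r \<notin> sd \<sigma> \<and> \<sigma> = {sd \<sigma>, X - sd \<sigma>} \<and> sd \<sigma> \<noteq> {} \<and> sd \<sigma> \<subseteq> X"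
proof -
  obtain A B where AB: "\<sigma> = {A,B}" "A \<noteq> {}" "B \<noteq> {}" "A \<inter> B = {}" "A \<union> B = X"
    using splits assms unfolding is_split_def by blast
  have ex: "\<exists>A. A \<in> \<sigma> \<and> r \<notin> A" using AB rX by blast
  then have h: "sd \<sigma> \<in> \<sigma> \<and> r \<notin> sd \<sigma>" unfolding sd_def by (rule someI_ex)
  then have "sd \<sigma> = A \<or> sd \<sigma> = B" using AB by auto
  then show ?thesis using h AB by auto
qed

lemma finS: "finite S"
proof -
  have "S \<subseteq> Pow (Pow X)" using sd_props by blast
  then show ?thesis using finX by (meson finite_Pow_iff finite_subset)
qed

lemma sd_inj: "\<sigma> \<in> S \<Longrightarrow> \<tau> \<in> S \<Longrightarrow> sd \<sigma> = sd \<tau> \<Longrightarrow> \<sigma> = \<tau>"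
  using sd_props by metis

lemma chain:
  assumes "\<sigma> \<in> S" "\<tau> \<in> S" "i \<in> sd \<sigma>" "i \<in> sd \<tau>"
  shows "sd \<sigma> \<subseteq> sd \<tau> \<or> sd \<tau> \<subseteq> sd \<sigma>"
proof -
  obtain A C where AC: "A \<in> \<sigma>" "C \<in> \<tau>" "A \<inter> C = {}"
    using compat assms unfolding compatible_system_def splits_compatible_def by blast
  obtain a b where ab: "a = sd \<sigma>" "b = sd \<tau>" by simp
  have s1: "\<sigma> = {a, X - a}" "a \<subseteq> X" "r \<notin> a" using sd_props[OF assms(1)] ab by auto
  have s2: "\<tau> = {b, X - b}" "b \<subseteq> X" "r \<notin> b" using sd_props[OF assms(2)] ab by auto
  have iab: "i \<in> a" "i \<in> b" using assms ab by auto
  have A: "A = a \<or> A = X - a" using AC(1) s1(1) by simp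
  have C: "C = b \<or> C = X - b" using AC(2) s2(1) by simp
  have "a \<subseteq> b \<or> b \<subseteq> a"
    using A C
  proof (elim disjE)
    assume "A = a" "C = b" then show ?thesis using AC iab by blast
  next
    assume "A = a" "C = X - b" then show ?thesis using AC s1 by blast
  next
    assume "A = X - a" "C = b" then show ?thesis using AC s2 by blast
  next
    assume "A = X - a" "C = X - b" then show ?thesis using AC rX s1 s2 by blast
  qed
  then show ?thesis using ab by simp
qed

lemma delta_eq:
  assumes "\<sigma> \<in> S" "i \<in> X" "j \<in> X"
  shows "split_delta \<sigma> i j = (if (i \<in> sd \<sigma>) = (j \<in> sd \<sigma>) then 0 else 1)"
proof -
  obtain a where ab: "a = sd \<sigma>" by simp
  have s1: "\<sigma> = {a, X - a}" using sd_props[OF assms(1)] ab by auto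
  have "(\<exists>A\<in>\<sigma>. i \<in> A \<and> j \<in> A) = ((i \<in> a) = (j \<in> a))"
    unfolding s1 using assms(2,3) by auto
  then show ?thesis unfolding split_delta_def ab by simp
qed

definition P :: "'a set set \<Rightarrow> 'a set set set" where "P \<sigma> = {\<tau>\<in>S. sd \<sigma> \<subseteq> sd \<tau>}"

lemma tele:
  fixes g :: "'a set set set \<Rightarrow> real"
  shows "U \<subseteq> S \<Longrightarrow> \<forall>\<sigma>\<in>U. \<forall>\<tau>\<in>S. sd \<sigma> \<subseteq> sd \<tau> \<longrightarrow> \<tau> \<in> U \<Longrightarrow>
     \<forall>\<sigma>\<in>U. \<forall>\<tau>\<in>U. sd \<sigma> \<subseteq> sd \<tau> \<or> sd \<tau> \<subseteq> sd \<sigma> \<Longrightarrow>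
     (\<Sum>\<sigma>\<in>U. g (P \<sigma>) - g (P \<sigma> - {\<sigma>})) = g U - g {}"
proof (induction "card U" arbitrary: U rule: less_induct)
  case less
  have finU: "finite U" using finite_subset[OF less.prems(1) finS] .
  show ?case
  proof (cases "U = {}")
    case True then show ?thesis by simp
  next
    case False
    define m where "m = Min ((\<lambda>\<sigma>. card (sd \<sigma>)) ` U)"
    have "m \<in> (\<lambda>\<sigma>. card (sd \<sigma>)) ` U" using finU False m_def by simp
    then obtain \<sigma>0 where s0: "\<sigma>0 \<in> U" "card (sd \<sigma>0) = m" by blast
    have s0S: "\<sigma>0 \<in> S" using s0(1) less.prems(1) by blast
    have mle: "\<forall>\<tau>\<in>U. m \<le> card (sd \<tau>)" using finU m_def by simp
    have minl: "\<forall>\<tau>\<in>U. sd \<sigma>0 \<subseteq> sd \<tau>"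
    proof
      fix \<tau> assume t: "\<tau> \<in> U"
      have tS: "\<tau> \<in> S" using t less.prems(1) by blast
      have ft: "finite (sd \<sigma>0)" using finite_subset[OF _ finX] sd_props[OF s0S] by blast
      have ch: "sd \<sigma>0 \<subseteq> sd \<tau> \<or> sd \<tau> \<subseteq> sd \<sigma>0" using less.prems(3) t s0(1) by blast
      show "sd \<sigma>0 \<subseteq> sd \<tau>"
      proof (cases "sd \<sigma>0 \<subseteq> sd \<tau>")
        case True then show ?thesis .
      next
        case False
        then have sub: "sd \<tau> \<subseteq> sd \<sigma>0" using ch by simp
        have "card (sd \<sigma>0) \<le> card (sd \<tau>)" using mle t s0(2) by simp
        then have "sd \<tau> = sd \<sigma>0" using card_seteq[OF ft sub] by simp
        then show ?thesis by simp
      qed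
    qed
    have PU: "P \<sigma>0 = U"
    proof (rule set_eqI)
      fix \<tau>
      show "\<tau> \<in> P \<sigma>0 \<longleftrightarrow> \<tau> \<in> U"
      proof
        assume "\<tau> \<in> P \<sigma>0"
        then have "\<tau> \<in> S" "sd \<sigma>0 \<subseteq> sd \<tau>" unfolding P_def by simp_all
        then show "\<tau> \<in> U" using less.prems(2) s0(1) by blast
      next
        assume t: "\<tau> \<in> U"
        then have "\<tau> \<in> S" using less.prems(1) by blast
        then show "\<tau> \<in> P \<sigma>0" unfolding P_def using minl t by simp
      qed
    qed
    define U' where "U' = U - {\<sigma>0}"
    have "card U > 0" using finU s0 card_gt_0_iff by blast
    then have cl: "card U' < card U" unfolding U'_def using finU s0 by simp
    have up: "\<forall>\<sigma>\<in>U'. \<forall>\<tau>\<in>S. sd \<sigma> \<subseteq> sd \<tau> \<longrightarrow> \<tau> \<in> U'"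
    proof (intro ballI impI)
      fix \<sigma> \<tau> assume a: "\<sigma> \<in> U'" "\<tau> \<in> S" "sd \<sigma> \<subseteq> sd \<tau>"
      have sU: "\<sigma> \<in> U" using a(1) U'_def by simp
      have "\<tau> \<in> U" using less.prems(2) sU a(2,3) by blast
      moreover have "\<tau> \<noteq> \<sigma>0"
      proof
        assume "\<tau> = \<sigma>0"
        have "sd \<sigma>0 \<subseteq> sd \<sigma>" using minl sU by blast
        then have eq: "sd \<sigma> = sd \<sigma>0" using a(3) \<open>\<tau> = \<sigma>0\<close> by blast
        have "\<sigma> \<in> S" using sU less.prems(1) by blast
        then have "\<sigma> = \<sigma>0" using sd_inj eq s0S by blast
        then show False using a(1) U'_def by simp
      qed
      ultimately show "\<tau> \<in> U'" unfolding U'_def by simp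
    qed
    have U'S: "U' \<subseteq> S" using less.prems(1) U'_def by blast
    have ch': "\<forall>\<sigma>\<in>U'. \<forall>\<tau>\<in>U'. sd \<sigma> \<subseteq> sd \<tau> \<or> sd \<tau> \<subseteq> sd \<sigma>"
      using less.prems(3) U'_def by blast
    have IH: "(\<Sum>\<sigma>\<in>U'. g (P \<sigma>) - g (P \<sigma> - {\<sigma>})) = g U' - g {}"
      using less.hyps[OF cl U'S up ch'] .
    have "(\<Sum>\<sigma>\<in>U. g (P \<sigma>) - g (P \<sigma> - {\<sigma>})) = (g (P \<sigma>0) - g (P \<sigma>0 - {\<sigma>0})) + (\<Sum>\<sigma>\<in>U'. g (P \<sigma>) - g (P \<sigma> - {\<sigma>}))"
      unfolding U'_def using finU s0(1) by (rule sum.remove)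
    also have "\<dots> = g U - g {}" using IH PU U'_def by simp
    finally show ?thesis .
  qed
qed

definition c :: "'a \<Rightarrow> 'a set set set" where "c i = {\<sigma>\<in>S. i \<in> sd \<sigma>}"

definition \<rho> :: "'a set set set \<Rightarrow> 'a set set set \<Rightarrow> real" where
  "\<rho> U V = (\<Sum>\<sigma>\<in>S. \<alpha> \<sigma> * (if (\<sigma>\<in>U) = (\<sigma>\<in>V) then 0 else 1))"

lemma rho_tri: "\<rho> A C \<le> \<rho> A B + \<rho> B C"
  unfolding \<rho>_def sum.distrib[symmetric]
  by (rule sum_mono) (use pos in auto)

lemma rho_refl: "\<rho> A A = 0" unfolding \<rho>_def by simp

lemma rho_c: "i \<in> X \<Longrightarrow> j \<in> X \<Longrightarrow> d_alpha S \<alpha> i j = \<rho> (c i) (c j)"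
  unfolding d_alpha_def \<rho>_def c_def
  by (rule sum.cong) (auto simp: delta_eq)

lemma rho_del: assumes "\<sigma> \<in> S" "\<sigma> \<in> U"
  shows "\<rho> U (U - {\<sigma>}) = \<alpha> \<sigma>" "\<rho> (U - {\<sigma>}) U = \<alpha> \<sigma>"
proof -
  have "\<rho> U (U - {\<sigma>}) = (\<Sum>\<tau>\<in>S. if \<tau> = \<sigma> then \<alpha> \<tau> else 0)"
    unfolding \<rho>_def by (rule sum.cong) (use assms in auto)
  then show "\<rho> U (U - {\<sigma>}) = \<alpha> \<sigma>" using assms finS by simp
  have "\<rho> (U - {\<sigma>}) U = (\<Sum>\<tau>\<in>S. if \<tau> = \<sigma> then \<alpha> \<tau> else 0)"
    unfolding \<rho>_def by (rule sum.cong) (use assms in auto)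
  then show "\<rho> (U - {\<sigma>}) U = \<alpha> \<sigma>" using assms finS by simp
qed

definition G :: "('a \<Rightarrow> real) \<Rightarrow> 'a set set set \<Rightarrow> real" where
  "G x U = Max ((\<lambda>j. x j - \<rho> (c j) U) ` X)"

lemma G_ge: "j \<in> X \<Longrightarrow> x j - \<rho> (c j) U \<le> G x U"
  unfolding G_def using finX by simp

lemma G_attained: "\<exists>j\<in>X. G x U = x j - \<rho> (c j) U"
proof -
  have "G x U \<in> (\<lambda>j. x j - \<rho> (c j) U) ` X" unfolding G_def
    using finX rX by (intro Max_in) auto
  then show ?thesis by auto
qed

lemma G_lip: "G x U - G x V \<le> \<rho> U V"
proof -
  obtain j where j: "j \<in> X" "G x U = x j - \<rho> (c j) U" using G_attained by blast
  have "x j - \<rho> (c j) V \<le> G x V" using G_ge j by blast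
  moreover have "\<rho> (c j) V \<le> \<rho> (c j) U + \<rho> U V" by (rule rho_tri)
  ultimately show ?thesis using j by linarith
qed

lemma G_c: assumes "x \<in> LIP X (d_alpha S \<alpha>)" "i \<in> X" shows "G x (c i) = x i"
proof -
  have "x i \<le> G x (c i)" using G_ge[OF assms(2), of x "c i"] rho_refl by simp
  moreover obtain j where j: "j \<in> X" "G x (c i) = x j - \<rho> (c j) (c i)" using G_attained by blast
  moreover have "x j - x i \<le> d_alpha S \<alpha> j i"
    using assms j unfolding LIP_def by blast
  moreover have "d_alpha S \<alpha> j i = \<rho> (c j) (c i)" using rho_c assms j by blast
  ultimately show ?thesis by linarith
qed

definition w :: "('a \<Rightarrow> real) \<Rightarrow> 'a set set \<Rightarrow> real" where
  "w x \<sigma> = G x (P \<sigma>) - G x (P \<sigma> - {\<sigma>})"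

lemma w_bound: assumes "\<sigma> \<in> S" shows "\<bar>w x \<sigma>\<bar> \<le> \<alpha> \<sigma>"
proof -
  have m: "\<sigma> \<in> P \<sigma>" using assms unfolding P_def by auto
  show ?thesis using G_lip[of x "P \<sigma>" "P \<sigma> - {\<sigma>}"] G_lip[of x "P \<sigma> - {\<sigma>}" "P \<sigma>"]
      rho_del[OF assms m] unfolding w_def by linarith
qed

lemma repr: assumes "x \<in> LIP X (d_alpha S \<alpha>)" "i \<in> X"
  shows "x i = G x {} + (\<Sum>\<sigma>\<in>S. w x \<sigma> * indic (sd \<sigma>) i)"
proof -
  have "(\<Sum>\<sigma>\<in>c i. G x (P \<sigma>) - G x (P \<sigma> - {\<sigma>})) = G x (c i) - G x {}"
  proof (rule tele)
    show "c i \<subseteq> S" unfolding c_def by auto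
    show "\<forall>\<sigma>\<in>c i. \<forall>\<tau>\<in>S. sd \<sigma> \<subseteq> sd \<tau> \<longrightarrow> \<tau> \<in> c i" unfolding c_def by auto
    show "\<forall>\<sigma>\<in>c i. \<forall>\<tau>\<in>c i. sd \<sigma> \<subseteq> sd \<tau> \<or> sd \<tau> \<subseteq> sd \<sigma>" unfolding c_def using chain by auto
  qed
  moreover have "(\<Sum>\<sigma>\<in>S. w x \<sigma> * indic (sd \<sigma>) i) = (\<Sum>\<sigma>\<in>c i. w x \<sigma>)"
    unfolding c_def sum.inter_filter[OF finS] by (rule sum.cong) (auto simp: indic_def)
  ultimately show ?thesis using G_c[OF assms] unfolding w_def by simp
qed

definition e :: "'a set set \<Rightarrow> 'a \<Rightarrow> real" where
  "e \<sigma> i = indic (sd \<sigma>) i - real (card (sd \<sigma>)) / real (card X) * indic X i"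

lemma cardX: "card X > 0" using finX rX card_gt_0_iff by blast

lemma split_vec_pm: assumes "\<sigma> \<in> S"
  shows "split_vec X \<sigma> = e \<sigma> \<or> split_vec X \<sigma> = (\<lambda>i. - e \<sigma> i)"
proof -
  have sp: "\<sigma> = {sd \<sigma>, X - sd \<sigma>}" "sd \<sigma> \<subseteq> X" using sd_props assms by auto
  define A where "A = (SOME A. A \<in> \<sigma>)"
  have "A \<in> \<sigma>" unfolding A_def using sp by (metis insertI1 someI)
  then have AA: "A = sd \<sigma> \<or> A = X - sd \<sigma>" using sp by auto
  have fs: "finite (sd \<sigma>)" using sp finX finite_subset by blast
  have cd: "card (X - sd \<sigma>) = card X - card (sd \<sigma>)" using sp finX by (simp add: card_Diff_subset fs)
  have le: "card (sd \<sigma>) \<le> card X" using sp finX card_mono by blast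
  have n0: "real (card X) \<noteq> 0" using cardX by simp
  have ca: "real (card (X - sd \<sigma>)) = real (card X) - real (card (sd \<sigma>))"
    using cd le by (simp add: of_nat_diff)
  have dd: "X - (X - sd \<sigma>) = sd \<sigma>" using sp by auto
  show ?thesis
  proof (cases "A = sd \<sigma>")
    case True
    have "split_vec X \<sigma> = e \<sigma>"
    proof
      fix i
      show "split_vec X \<sigma> i = e \<sigma> i"
        unfolding split_vec_def e_def Let_def A_def[symmetric] True
        by (cases "i \<in> sd \<sigma>"; cases "i \<in> X") (use sp in \<open>auto simp: indic_def ca diff_divide_distrib n0 cardX\<close>)
    qed
    then show ?thesis by simp
  next
    case False
    then have F: "A = X - sd \<sigma>" using AA by simp
    have "split_vec X \<sigma> = (\<lambda>i. - e \<sigma> i)"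
    proof
      fix i
      show "split_vec X \<sigma> i = - e \<sigma> i"
        unfolding split_vec_def e_def Let_def A_def[symmetric] F dd
        by (cases "i \<in> sd \<sigma>"; cases "i \<in> X") (use sp in \<open>auto simp: indic_def ca diff_divide_distrib n0 cardX\<close>)
    qed
    then show ?thesis by simp
  qed
qed

lemma seg_mem: assumes "\<sigma> \<in> S" "\<bar>s\<bar> \<le> \<alpha> \<sigma>"
  shows "(\<lambda>i. s * e \<sigma> i) \<in> scale_set (\<alpha> \<sigma>) (split_seg X \<sigma>)"
proof -
  have ap: "\<alpha> \<sigma> > 0" using pos assms by auto
  obtain \<epsilon> :: real where eps: "\<epsilon> = 1 \<or> \<epsilon> = -1" "split_vec X \<sigma> = (\<lambda>i. \<epsilon> * e \<sigma> i)"
  proof (cases "split_vec X \<sigma> = e \<sigma>")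
    case True
    then show ?thesis using that[of 1] by simp
  next
    case False
    then have "split_vec X \<sigma> = (\<lambda>i. - e \<sigma> i)" using split_vec_pm[OF assms(1)] by simp
    then show ?thesis using that[of "-1"] by simp
  qed
  define q where "q = \<epsilon> * s / \<alpha> \<sigma>"
  define u where "u = (1 - q) / 2"
  have "\<bar>\<epsilon> * s\<bar> = \<bar>s\<bar>" using eps(1) by (elim disjE) simp_all
  then have "\<bar>\<epsilon> * s\<bar> \<le> \<alpha> \<sigma>" using assms(2) by simp
  then have "\<bar>\<epsilon> * s\<bar> / \<alpha> \<sigma> \<le> 1" using ap by (simp only: divide_le_eq_1_pos)
  moreover have "\<bar>q\<bar> = \<bar>\<epsilon> * s\<bar> / \<alpha> \<sigma>" unfolding q_def using ap by (simp only: abs_divide abs_of_pos)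
  ultimately have "\<bar>q\<bar> \<le> 1" by simp
  then have u01: "0 \<le> u" "u \<le> 1" unfolding u_def using abs_le_iff[of q 1] by auto
  have u2: "\<alpha> \<sigma> * (1 - 2*u) = \<epsilon> * s" unfolding u_def q_def using ap by (simp add: field_simps)
  define y where "y = (\<lambda>i. (1 - u) * split_vec X \<sigma> i + u * (- split_vec X \<sigma> i))"
  have "y \<in> split_seg X \<sigma>" using u01 unfolding split_seg_def y_def by (intro CollectI exI[of _ u]) simp
  moreover have "(\<lambda>i. s * e \<sigma> i) = (\<lambda>i. \<alpha> \<sigma> * y i)"
  proof
    fix i
    have ee: "\<epsilon> * \<epsilon> = 1" using eps(1) by auto
    have "\<alpha> \<sigma> * y i = \<alpha> \<sigma> * (1 - 2*u) * \<epsilon> * e \<sigma> i" unfolding y_def eps(2) by (simp add: algebra_simps)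
    also have "\<dots> = s * (\<epsilon> * \<epsilon>) * e \<sigma> i" using u2 by (simp add: ac_simps)
    finally show "s * e \<sigma> i = \<alpha> \<sigma> * y i" using ee by simp
  qed
  ultimately show ?thesis unfolding scale_set_def by (intro CollectI exI[of _ y]) simp
qed

lemma seg_elem: assumes "\<sigma> \<in> S" "z \<in> scale_set (\<alpha> \<sigma>) (split_seg X \<sigma>)"
  shows "\<exists>s. \<bar>s\<bar> \<le> \<alpha> \<sigma> \<and> z = (\<lambda>i. s * e \<sigma> i)"
proof -
  have ap: "\<alpha> \<sigma> > 0" using pos assms by auto
  obtain \<epsilon> :: real where eps: "\<epsilon> = 1 \<or> \<epsilon> = -1" "split_vec X \<sigma> = (\<lambda>i. \<epsilon> * e \<sigma> i)"
  proof (cases "split_vec X \<sigma> = e \<sigma>")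
    case True
    then show ?thesis using that[of 1] by simp
  next
    case False
    then have "split_vec X \<sigma> = (\<lambda>i. - e \<sigma> i)" using split_vec_pm[OF assms(1)] by simp
    then show ?thesis using that[of "-1"] by simp
  qed
  obtain u where u: "0 \<le> u" "u \<le> 1"
    "z = (\<lambda>i. \<alpha> \<sigma> * ((1 - u) * split_vec X \<sigma> i + u * (- split_vec X \<sigma> i)))"
    using assms(2) unfolding scale_set_def split_seg_def by auto
  define s where "s = \<alpha> \<sigma> * (1 - 2*u) * \<epsilon>"
  have "\<bar>s\<bar> \<le> \<alpha> \<sigma>" unfolding s_def using u eps(1) ap by (auto simp: abs_mult abs_le_iff)
  moreover have "z = (\<lambda>i. s * e \<sigma> i)" unfolding u(3) eps(2) s_def by (simp add: algebra_simps)
  ultimately show ?thesis by (intro exI[of _ s]) simp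
qed

lemma indic_sum: "A \<subseteq> X \<Longrightarrow> (\<Sum>i\<in>X. indic A i) = real (card A)"
  unfolding indic_def using finX by (simp add: sum.If_cases Int_absorb1)

lemma e_sum: "\<sigma> \<in> S \<Longrightarrow> (\<Sum>i\<in>X. e \<sigma> i) = 0"
proof -
  assume a: "\<sigma> \<in> S"
  have "sd \<sigma> \<subseteq> X" using sd_props[OF a] by blast
  then show ?thesis unfolding e_def sum_subtractf sum_distrib_left[symmetric]
    using indic_sum[of "sd \<sigma>"] indic_sum[of X] cardX by simp
qed

lemma e_out: assumes "\<sigma> \<in> S" "i \<notin> X" shows "e \<sigma> i = 0"
proof -
  have "i \<notin> sd \<sigma>" using sd_props[OF assms(1)] assms(2) by blast
  then show ?thesis unfolding e_def indic_def using assms(2) by simp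
qed

lemma e_diff: "\<sigma> \<in> S \<Longrightarrow> i \<in> X \<Longrightarrow> j \<in> X \<Longrightarrow> e \<sigma> i - e \<sigma> j = indic (sd \<sigma>) i - indic (sd \<sigma>) j"
  unfolding e_def indic_def by auto

lemma sub1: assumes "x \<in> LIP X (d_alpha S \<alpha>)"
  shows "x \<in> minkowski_sum S (\<lambda>\<sigma>. scale_set (\<alpha> \<sigma>) (split_seg X \<sigma>))"
proof -
  define K where "K = G x {}"
  define n where "n = real (card X)"
  have n0: "n > 0" unfolding n_def using cardX by simp
  have rep: "\<And>i. i \<in> X \<Longrightarrow> x i = K + (\<Sum>\<sigma>\<in>S. w x \<sigma> * indic (sd \<sigma>) i)"
    using repr[OF assms] K_def by blast
  have "0 = (\<Sum>i\<in>X. x i)" using assms unfolding LIP_def by auto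
  also have "\<dots> = (\<Sum>i\<in>X. K + (\<Sum>\<sigma>\<in>S. w x \<sigma> * indic (sd \<sigma>) i))" using rep by simp
  also have "\<dots> = n * K + (\<Sum>\<sigma>\<in>S. w x \<sigma> * (\<Sum>i\<in>X. indic (sd \<sigma>) i))"
    unfolding sum.distrib n_def sum_distrib_left by (simp add: sum.swap[of _ X])
  also have "\<dots> = n * K + (\<Sum>\<sigma>\<in>S. w x \<sigma> * real (card (sd \<sigma>)))"
    using indic_sum sd_props by simp
  finally have tot: "(\<Sum>\<sigma>\<in>S. w x \<sigma> * real (card (sd \<sigma>))) = - n * K" by linarith
  have xeq: "x = (\<lambda>i. \<Sum>\<sigma>\<in>S. w x \<sigma> * e \<sigma> i)"
  proof
    fix i
    show "x i = (\<Sum>\<sigma>\<in>S. w x \<sigma> * e \<sigma> i)"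
    proof (cases "i \<in> X")
      case True
      have "(\<Sum>\<sigma>\<in>S. w x \<sigma> * e \<sigma> i) = (\<Sum>\<sigma>\<in>S. w x \<sigma> * indic (sd \<sigma>) i - w x \<sigma> * real (card (sd \<sigma>)) / n)"
        by (rule sum.cong) (auto simp: e_def indic_def n_def True right_diff_distrib)
      also have "\<dots> = (\<Sum>\<sigma>\<in>S. w x \<sigma> * indic (sd \<sigma>) i) - (\<Sum>\<sigma>\<in>S. w x \<sigma> * real (card (sd \<sigma>))) / n"
        by (simp add: sum_subtractf sum_divide_distrib)
      also have "\<dots> = x i" using tot rep[OF True] n0 by simp
      finally show ?thesis by simp
    next
      case False
      then show ?thesis using assms e_out unfolding LIP_def vecs_def by simp
    qed
  qed
  have mem: "\<forall>k\<in>S. (\<lambda>i. w x k * e k i) \<in> scale_set (\<alpha> k) (split_seg X k)"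
    using seg_mem w_bound by blast
  show ?thesis unfolding minkowski_sum_def
    apply (rule CollectI)
    apply (rule exI[of _ "\<lambda>\<sigma> i. w x \<sigma> * e \<sigma> i"])
    using xeq mem by simp
qed

lemma sub2: assumes "x \<in> minkowski_sum S (\<lambda>\<sigma>. scale_set (\<alpha> \<sigma>) (split_seg X \<sigma>))"
  shows "x \<in> LIP X (d_alpha S \<alpha>)"
proof -
  obtain f where f: "x = (\<lambda>i. \<Sum>k\<in>S. f k i)" "\<forall>k\<in>S. f k \<in> scale_set (\<alpha> k) (split_seg X k)"
    using assms unfolding minkowski_sum_def by (auto simp only: mem_Collect_eq)
  have "\<forall>k\<in>S. \<exists>s. \<bar>s\<bar> \<le> \<alpha> k \<and> f k = (\<lambda>i. s * e k i)" using seg_elem f(2) by blast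
  then obtain s where s: "\<And>k. k \<in> S \<Longrightarrow> \<bar>s k\<bar> \<le> \<alpha> k \<and> f k = (\<lambda>i. s k * e k i)"
    by (metis (no_types))
  have xe: "x = (\<lambda>i. \<Sum>k\<in>S. s k * e k i)" unfolding f(1) using s by (intro ext sum.cong) auto
  have "x \<in> vecs X" unfolding vecs_def xe using e_out by simp
  moreover have "(\<Sum>i\<in>X. x i) = 0"
  proof -
    have "(\<Sum>i\<in>X. x i) = (\<Sum>k\<in>S. \<Sum>i\<in>X. s k * e k i)" unfolding xe by (rule sum.swap)
    also have "\<dots> = (\<Sum>k\<in>S. s k * (\<Sum>i\<in>X. e k i))" by (simp add: sum_distrib_left)
    also have "\<dots> = 0" using e_sum by simp
    finally show ?thesis .
  qed
  moreover have "\<forall>i\<in>X. \<forall>j\<in>X. x i - x j \<le> d_alpha S \<alpha> i j"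
  proof (intro ballI)
    fix i j assume ij: "i \<in> X" "j \<in> X"
    have "x i - x j = (\<Sum>k\<in>S. s k * (e k i - e k j))" unfolding xe by (simp add: sum_subtractf[symmetric] right_diff_distrib)
    also have "\<dots> \<le> (\<Sum>k\<in>S. \<alpha> k * split_delta k i j)"
    proof (rule sum_mono)
      fix k assume k: "k \<in> S"
      have "s k * (e k i - e k j) \<le> \<alpha> k * split_delta k i j"
        unfolding e_diff[OF k ij] delta_eq[OF k ij] indic_def using s[OF k]
        by (cases "i \<in> sd k"; cases "j \<in> sd k") (auto simp: abs_le_iff)
      then show "s k * (e k i - e k j) \<le> \<alpha> k * split_delta k i j" .
    qed
    finally show "x i - x j \<le> d_alpha S \<alpha> i j" unfolding d_alpha_def .
  qed
  ultimately show ?thesis unfolding LIP_def by blast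
qed

end

lemma LIP_cong: "\<forall>i\<in>X. \<forall>j\<in>X. d i j = d' i j \<Longrightarrow> LIP X d = LIP X d'"
  unfolding LIP_def by auto

theorem mainTheorem4:
  fixes X :: "'a set" and d :: "'a \<Rightarrow> 'a \<Rightarrow> real"
    and S :: "'a set set set" and \<alpha> :: "'a set set \<Rightarrow> real"
  assumes "finite X"
    and "\<forall>\<sigma>\<in>S. is_split X \<sigma>"
    and "compatible_system S"
    and "\<forall>\<sigma>\<in>S. \<alpha> \<sigma> > 0"
    and "\<forall>i\<in>X. \<forall>j\<in>X. d i j = d_alpha S \<alpha> i j"
  shows "LIP X d = minkowski_sum S (\<lambda>\<sigma>. scale_set (\<alpha> \<sigma>) (split_seg X \<sigma>))"
proof (cases "X = {}")
  case True
  have S0: "S = {}"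
  proof (rule ccontr)
    assume "S \<noteq> {}" then obtain \<sigma> where "\<sigma> \<in> S" by blast
    then obtain A B where "A \<noteq> {}" "A \<union> B = X" using assms(2) unfolding is_split_def by blast
    then show False using True by blast
  qed
  have "LIP X d = {\<lambda>i. 0}" unfolding LIP_def vecs_def True by (rule set_eqI) (auto simp: fun_eq_iff)
  moreover have "minkowski_sum S (\<lambda>\<sigma>. scale_set (\<alpha> \<sigma>) (split_seg X \<sigma>)) = {\<lambda>i. 0}"
    unfolding minkowski_sum_def S0 by auto
  ultimately show ?thesis by simp
next
  case False
  then obtain r where r: "r \<in> X" by blast
  interpret tsetup X S \<alpha> r
    by (rule tsetup.intro) (use assms r in simp_all)
  have L: "LIP X d = LIP X (d_alpha S \<alpha>)" by (rule LIP_cong) (use assms(5) in simp)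
  show ?thesis unfolding L
  proof (rule set_eqI, rule iffI)
    fix x assume "x \<in> LIP X (d_alpha S \<alpha>)"
    then show "x \<in> minkowski_sum S (\<lambda>\<sigma>. scale_set (\<alpha> \<sigma>) (split_seg X \<sigma>))" by (rule sub1)
  next
    fix x assume "x \<in> minkowski_sum S (\<lambda>\<sigma>. scale_set (\<alpha> \<sigma>) (split_seg X \<sigma>))"
    then show "x \<in> LIP X (d_alpha S \<alpha>)" by (rule sub2)
  qed
qed

end
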